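(* Let $c>0$ (and $s>0$, $F>1$) be constants. There exists a constant $\alpha_1>0$ depending only on $c$ such that at every time $t$, $$\mathbb E[Z^{t+1}-Z^t\mid x^t,\lambda^t]\ge -\Pr[B\mid x^t,\lambda^t]\cdot\alpha_1(1+\log\lambda^t).$$
   Context: Consider the SA-$(1,\lambda)$-EA on a dynamic monotone function: a function $f:\{0,1\}^n\to\mathbb R$ is monotone if $f(x)>f(y)$ whenever $x\ne y$ and $x_i\ge y_i$ for all $i$; $(f^t)_{t\ge0}$ is a sequence of monotone functions, $f^t$ possibly chosen adversarially depending on $x^t$. The algorithm (with constants $c>0$, $s>0$, $F>1$) maintains $x^t\in\{0,1\}^n$, real $\lambda^t\ge1$; in generation $t$ it creates $\lfloor\lambda^t\rceil$ (nearest integer) offspring, each independently by flipping every bit of $x^t$ independently with probability $c/n$; $x^{t+1}$ is an offspring maximizing $f^t$ (ties uniformly at random); $\lambda^{t+1}=\max\{1,\lambda^t/F\}$ if $f^t(x^{t+1})>f^t(x^t)$, else $\lambda^{t+1}=F^{1/s}\lambda^t$. $Z^t$ is the number of zero-bits of $x^t$. $B$ is the event that some offspring of $x^t$ flips at least one zero-bit of $x^t$. $\log$ is the natural logarithm. *)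

theory Defs
  imports "HOL-Probability.Probability"
begin

text \<open>Search points are bit strings of length n, represented as bool lists
  (True = one-bit, False = zero-bit).\<close>

definition monotone_pb :: "nat \<Rightarrow> (bool list \<Rightarrow> real) \<Rightarrow> bool" where
  "monotone_pb n f \<longleftrightarrow>
     (\<forall>x y. length x = n \<longrightarrow> length y = n \<longrightarrow> x \<noteq> y \<longrightarrow>
            (\<forall>i<n. y ! i \<le> x ! i) \<longrightarrow> f x > f y)"

definition zeros :: "nat \<Rightarrow> bool list \<Rightarrow> nat" where
  "zeros n x = card {i. i < n \<and> \<not> x ! i}"

fun mutate :: "real \<Rightarrow> bool list \<Rightarrow> bool list pmf" where
  "mutate p [] = return_pmf []"
| "mutate p (b # bs) =
     bind_pmf (bernoulli_pmf p) (\<lambda>fl.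
     bind_pmf (mutate p bs) (\<lambda>rest.
     return_pmf ((if fl then \<not> b else b) # rest)))"

fun offspring :: "real \<Rightarrow> nat \<Rightarrow> bool list \<Rightarrow> bool list list pmf" where
  "offspring p 0 x = return_pmf []"
| "offspring p (Suc k) x =
     bind_pmf (mutate p x) (\<lambda>y.
     bind_pmf (offspring p k x) (\<lambda>ys. return_pmf (y # ys)))"

definition best_idx :: "(bool list \<Rightarrow> real) \<Rightarrow> bool list list \<Rightarrow> nat set" where
  "best_idx f ys = {i. i < length ys \<and> (\<forall>j<length ys. f (ys ! j) \<le> f (ys ! i))}"

text \<open>One generation of the SA-(1,lambda)-EA: returns the offspring population
  together with the selected new parent x^{t+1} (ties broken uniformly at random
  among maximizing offspring).  The update of lambda does not influence x^{t+1}.\<close>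
definition generation :: "real \<Rightarrow> nat \<Rightarrow> real \<Rightarrow> (bool list \<Rightarrow> real) \<Rightarrow> bool list
      \<Rightarrow> (bool list list \<times> bool list) pmf" where
  "generation c n lam f x =
     bind_pmf (offspring (c / real n) (nat (round lam)) x) (\<lambda>ys.
     bind_pmf (pmf_of_set (best_idx f ys)) (\<lambda>i. return_pmf (ys, ys ! i)))"

definition event_B :: "nat \<Rightarrow> bool list \<Rightarrow> bool list list \<Rightarrow> bool" where
  "event_B n x ys \<longleftrightarrow> (\<exists>y \<in> set ys. \<exists>i<n. \<not> x ! i \<and> y ! i)"

end

theory Submission imports Defs begin

lemma exp_bind_fin:
  fixes h :: "'b \<Rightarrow> real"
  assumes "finite (set_pmf M)" "\<And>x. x \<in> set_pmf M \<Longrightarrow> finite (set_pmf (N x))"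
  shows "measure_pmf.expectation (bind_pmf M N) h = measure_pmf.expectation M (\<lambda>x. measure_pmf.expectation (N x) h)"
proof -
  have "measure_pmf.expectation (bind_pmf M N) h = (\<Sum>a\<in>set_pmf M. pmf M a *\<^sub>R measure_pmf.expectation (N a) h)"
    using assms by (intro pmf_expectation_bind) auto
  also have "\<dots> = measure_pmf.expectation M (\<lambda>x. measure_pmf.expectation (N x) h)"
    using assms by (subst integral_measure_pmf[of "set_pmf M"]) auto
  finally show ?thesis .
qed

lemma fin_bern: "finite (set_pmf (bernoulli_pmf p))"
  by (rule finite_subset[OF subset_UNIV]) simp

lemma fin_mutate: "finite (set_pmf (mutate p x))"
  by (induction x) (auto intro: fin_bern)

lemma len_mutate: "y \<in> set_pmf (mutate p x) \<Longrightarrow> length y = length x"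
  by (induction x arbitrary: y) auto

lemma fin_offspring: "finite (set_pmf (offspring p k x))"
  by (induction k) (auto intro: fin_mutate)

lemma set_offspring: "ys \<in> set_pmf (offspring p k x) \<Longrightarrow> length ys = k \<and> (\<forall>y\<in>set ys. y \<in> set_pmf (mutate p x))"
  by (induction k arbitrary: ys) auto

lemma exp_mutate_Cons:
  fixes h :: "bool list \<Rightarrow> real"
  assumes "0 \<le> p" "p \<le> 1"
  shows "measure_pmf.expectation (mutate p (b # bs)) h =
     p * measure_pmf.expectation (mutate p bs) (\<lambda>r. h ((\<not> b) # r)) +
     (1 - p) * measure_pmf.expectation (mutate p bs) (\<lambda>r. h (b # r))"
proof -
  have "measure_pmf.expectation (mutate p (b # bs)) h =
    measure_pmf.expectation (bernoulli_pmf p) (\<lambda>fl. measure_pmf.expectation (mutate p bs) (\<lambda>r. h ((if fl then \<not> b else b) # r)))"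
    by (simp only: mutate.simps, subst exp_bind_fin) (auto simp: fin_bern fin_mutate exp_bind_fin)
  also have "\<dots> = p * measure_pmf.expectation (mutate p bs) (\<lambda>r. h ((\<not> b) # r)) +
     (1 - p) * measure_pmf.expectation (mutate p bs) (\<lambda>r. h (b # r))"
    using assms by (simp add: mult.commute)
  finally show ?thesis .
qed



fun flips :: "bool list \<Rightarrow> bool list \<Rightarrow> nat" where
  "flips (a # as) (b # bs) = (if \<not> a \<and> b then 1 else 0) + flips as bs"
| "flips _ _ = 0"

definition nzero :: "bool list \<Rightarrow> nat" where "nzero x = length (filter Not x)"

lemma nzero_simps[simp]: "nzero [] = 0" "nzero (b # bs) = (if b then 0 else 1) + nzero bs"
  by (auto simp: nzero_def)

lemma exp_pow2:
  assumes "0 \<le> p" "p \<le> 1"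
  shows "measure_pmf.expectation (mutate p x) (\<lambda>y. (2::real) ^ flips x y) = (1 + p) ^ nzero x"
proof (induction x)
  case Nil then show ?case by simp
next
  case (Cons b bs)
  show ?case using Cons assms
    by (subst exp_mutate_Cons[OF assms]) (cases b, simp_all add: algebra_simps)
qed

lemma exp_ind:
  assumes "0 \<le> p" "p \<le> 1"
  shows "measure_pmf.expectation (mutate p x) (\<lambda>y. if flips x y > 0 then 1 else 0 :: real) = 1 - (1 - p) ^ nzero x"
proof (induction x)
  case Nil then show ?case by simp
next
  case (Cons b bs)
  show ?case using Cons assms
    by (subst exp_mutate_Cons[OF assms]) (cases b; simp add: algebra_simps; metis distrib_left mult.right_neutral)
qed

lemma exp_F:
  assumes "0 \<le> p" "p \<le> 1"
  shows "measure_pmf.expectation (mutate p x) (\<lambda>y. real (flips x y) * 2 ^ flips x y) \<le> 2 * p * nzero x * (1 + p) ^ nzero x"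
proof (induction x)
  case Nil then show ?case by simp
next
  case (Cons b bs)
  let ?E = "\<lambda>h. measure_pmf.expectation (mutate p bs) h"
  let ?F = "?E (\<lambda>y. real (flips bs y) * 2 ^ flips bs y)"
  let ?M = "?E (\<lambda>y. (2::real) ^ flips bs y)"
  show ?case
  proof (cases b)
    case True then show ?thesis using Cons assms
      by (subst exp_mutate_Cons[OF assms]) (simp add: algebra_simps)
  next
    case False
    have e1: "?E (\<lambda>r. real (1 + flips bs r) * 2 ^ (1 + flips bs r)) = 2 * ?M + 2 * ?F"
      by (simp add: algebra_simps integrable_measure_pmf_finite fin_mutate)
    have "measure_pmf.expectation (mutate p (b # bs)) (\<lambda>y. real (flips (b # bs) y) * 2 ^ flips (b # bs) y)
       = p * (2 * ?M + 2 * ?F) + (1 - p) * ?F"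
      using False assms e1 by (subst exp_mutate_Cons[OF assms]) simp
    also have "\<dots> = 2 * p * (1 + p) ^ nzero bs + (1 + p) * ?F"
      using exp_pow2[OF assms, of bs] by (simp add: algebra_simps)
    also have "\<dots> \<le> 2 * p * (1 + p) ^ (Suc (nzero bs)) + (1 + p) * (2 * p * nzero bs * (1 + p) ^ nzero bs)"
      apply (rule add_mono)
      using assms Cons by (auto intro!: mult_left_mono mult_right_mono)
    also have "\<dots> = 2 * p * nzero (b # bs) * (1 + p) ^ nzero (b # bs)"
      using False by (simp add: algebra_simps)
    finally show ?thesis .
  qed
qed



lemma exp_offspring_sum:
  fixes \<phi> :: "bool list \<Rightarrow> real"
  shows "measure_pmf.expectation (offspring p k x) (\<lambda>ys. sum_list (map \<phi> ys)) = k * measure_pmf.expectation (mutate p x) \<phi>"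
proof (induction k)
  case 0 then show ?case by simp
next
  case (Suc k)
  have "measure_pmf.expectation (offspring p (Suc k) x) (\<lambda>ys. sum_list (map \<phi> ys))
     = measure_pmf.expectation (mutate p x) (\<lambda>y. measure_pmf.expectation (offspring p k x) (\<lambda>ys. \<phi> y + sum_list (map \<phi> ys)))"
    by (simp only: offspring.simps, subst exp_bind_fin) (auto simp: fin_mutate fin_offspring exp_bind_fin)
  also have "\<dots> = measure_pmf.expectation (mutate p x) (\<lambda>y. \<phi> y + k * measure_pmf.expectation (mutate p x) \<phi>)"
    using Suc by (simp add: integrable_measure_pmf_finite fin_offspring)
  also have "\<dots> = Suc k * measure_pmf.expectation (mutate p x) \<phi>"
    by (simp add: integrable_measure_pmf_finite fin_mutate algebra_simps)
  finally show ?case .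
qed

lemma exp_offspring_hd:
  fixes \<phi> :: "bool list \<Rightarrow> real"
  shows "measure_pmf.expectation (offspring p (Suc k) x) (\<lambda>ys. \<phi> (hd ys)) = measure_pmf.expectation (mutate p x) \<phi>"
  by (simp only: offspring.simps, subst exp_bind_fin) (auto simp: fin_mutate fin_offspring exp_bind_fin)

fun gmax :: "bool list \<Rightarrow> bool list list \<Rightarrow> nat" where
  "gmax x [] = 0"
| "gmax x (y # ys) = max (flips x y) (gmax x ys)"

lemma gmax_ge: "y \<in> set ys \<Longrightarrow> flips x y \<le> gmax x ys"
  by (induction ys) auto

lemma gmax_bound:
  fixes T :: nat
  shows "real (gmax x ys) \<le> real T * (if gmax x ys > 0 then 1 else 0 :: real) + sum_list (map (\<lambda>y. max 0 (real (flips x y) - T)) ys)"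
proof (induction ys)
  case Nil then show ?case by simp
next
  case (Cons y ys)
  have s: "0 \<le> sum_list (map (\<lambda>y. max 0 (real (flips x y) - T)) ys)"
    by (induction ys) auto
  show ?case using Cons s by (cases "flips x y \<le> gmax x ys") (auto simp: max_def split: if_splits)
qed

lemma flips_pos: "length x = length y \<Longrightarrow> (flips x y > 0) = (\<exists>i<length x. \<not> x ! i \<and> y ! i)"
proof (induction x y rule: list_induct2)
  case Nil then show ?case by simp
next
  case (Cons a as b bs)
  then show ?case by (auto simp: less_Suc_eq_0_disj)
qed

lemma gmax_pos: "(gmax x ys > 0) = (\<exists>y\<in>set ys. flips x y > 0)"
  by (induction ys) auto

lemma nzero_flips: "length x = length y \<Longrightarrow> nzero x \<le> nzero y + flips x y"
  by (induction x y rule: list_induct2) auto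

lemma zeros_nzero: "length x = n \<Longrightarrow> zeros n x = nzero x"
  by (simp add: zeros_def nzero_def length_filter_conv_card)



lemma best_idx_ne:
  assumes "ys \<noteq> []"
  shows "best_idx f ys \<noteq> {}" "finite (best_idx f ys)"
proof -
  let ?m = "Max (f ` set ys)"
  have "?m \<in> f ` set ys" using assms by (intro Max_in) auto
  then obtain y where y: "y \<in> set ys" "f y = ?m" by auto
  then obtain i where i: "i < length ys" "ys ! i = y" by (auto simp: in_set_conv_nth)
  have "\<forall>j<length ys. f (ys ! j) \<le> f (ys ! i)"
    using i y by (auto intro!: Max_ge)
  then show "best_idx f ys \<noteq> {}" using i unfolding best_idx_def by blast
  show "finite (best_idx f ys)" unfolding best_idx_def by auto
qed

lemma gen_fst:
  fixes h :: "bool list list \<Rightarrow> real"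
  assumes "k = nat (round lam)" "k \<ge> 1"
  shows "measure_pmf.expectation (generation c n lam f x) (\<lambda>z. h (fst z))
       = measure_pmf.expectation (offspring (c / real n) k x) h"
proof -
  have ne: "ys \<in> set_pmf (offspring (c / real n) k x) \<Longrightarrow> ys \<noteq> []" for ys
    using set_offspring[of ys] assms by fastforce
  have inner: "ys \<noteq> [] \<Longrightarrow> measure_pmf.expectation (bind_pmf (pmf_of_set (best_idx f ys)) (\<lambda>i. return_pmf (ys, ys!i))) (\<lambda>z. h (fst z)) = h ys" for ys
    by (subst exp_bind_fin) (auto simp: best_idx_ne)
  show ?thesis unfolding generation_def assms(1)[symmetric]
    apply (subst exp_bind_fin)
    using ne best_idx_ne
    by (auto simp: fin_offspring inner intro!: integral_cong_AE AE_pmfI)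
qed

lemma fin_gen:
  assumes "k = nat (round lam)" "k \<ge> 1"
  shows "finite (set_pmf (generation c n lam f x))"
proof -
  have ne: "ys \<in> set_pmf (offspring (c / real n) k x) \<Longrightarrow> ys \<noteq> []" for ys
    using set_offspring[of ys] assms by fastforce
  show ?thesis unfolding generation_def assms(1)[symmetric]
    using ne best_idx_ne fin_offspring by auto
qed

lemma gen_support:
  assumes "k = nat (round lam)" "k \<ge> 1" "z \<in> set_pmf (generation c n lam f x)"
  shows "fst z \<in> set_pmf (offspring (c / real n) k x) \<and> snd z \<in> set (fst z)"
proof -
  have ne: "ys \<in> set_pmf (offspring (c / real n) k x) \<Longrightarrow> ys \<noteq> []" for ys
    using set_offspring[of ys] assms by fastforce
  show ?thesis using assms(3) unfolding generation_def assms(1)[symmetric]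
    using ne best_idx_ne by (auto simp: best_idx_def)
qed



lemma max_pow_bound:
  fixes g T :: nat
  shows "max 0 (real g - real T) \<le> real g * 2 ^ g / 2 ^ (T + 1)"
proof (cases "g \<le> T")
  case True then show ?thesis by simp
next
  case False
  then have "(2::real) ^ (T + 1) \<le> 2 ^ g" by (intro power_increasing) auto
  then have "1 \<le> (2::real) ^ g / 2 ^ (T + 1)" by simp
  then have "real g * 1 \<le> real g * (2 ^ g / 2 ^ (T + 1))" by (intro mult_left_mono) auto
  then show ?thesis using False by auto
qed

lemma pZ_bound:
  fixes p :: real and Z :: nat
  assumes "0 \<le> p" "p \<le> 1" "p * Z \<le> c"
  shows "p * Z \<le> (1 + c) * (1 - (1 - p) ^ Z)"
proof -
  let ?u = "p * Z"
  have "1 - p \<le> exp (- p)" using exp_ge_add_one_self[of "-p"] by simp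
  then have "(1 - p) ^ Z \<le> exp (- p) ^ Z" using assms by (intro power_mono) auto
  also have "\<dots> = exp (- ?u)" by (simp add: exp_of_nat_mult[symmetric] mult.commute)
  finally have a: "(1 - p) ^ Z \<le> exp (- ?u)" .
  have u0: "0 \<le> ?u" using assms by simp
  have "1 + ?u \<le> exp ?u" by (rule exp_ge_add_one_self)
  then have "exp (- ?u) * (1 + ?u) \<le> 1"
  proof -
    have "exp (- ?u) * (1 + ?u) \<le> exp (- ?u) * exp ?u" using \<open>1 + ?u \<le> exp ?u\<close> by (intro mult_left_mono) auto
    also have "\<dots> = 1" by (simp add: exp_add[symmetric])
    finally show ?thesis .
  qed
  then have "?u \<le> (1 + ?u) * (1 - exp (- ?u))" by (simp add: algebra_simps)
  also have "\<dots> \<le> (1 + c) * (1 - exp (- ?u))"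
    using assms u0 by (intro mult_right_mono) auto
  also have "\<dots> \<le> (1 + c) * (1 - (1 - p) ^ Z)"
    using a assms u0 by (intro mult_left_mono) linarith+
  finally show ?thesis .
qed

lemma ln2_half: "1/2 \<le> ln (2::real)"
proof -
  have "ln (1/2::real) \<le> 1/2 - 1" by (rule ln_le_minus_one) auto
  then show ?thesis by (simp add: ln_div)
qed



theorem mainTheorem17:
  fixes c :: real
  assumes "c > 0"
  shows "\<exists>\<alpha>1 > 0. \<forall>(n::nat) (x::bool list) (lam::real) (f::bool list \<Rightarrow> real).
           n \<ge> 1 \<longrightarrow> c \<le> real n \<longrightarrow> length x = n \<longrightarrow> lam \<ge> 1 \<longrightarrow> monotone_pb n f \<longrightarrow>
           measure_pmf.expectation (generation c n lam f x)
               (\<lambda>(ys, x'). real (zeros n x') - real (zeros n x))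
           \<ge> - measure_pmf.prob (generation c n lam f x) {(ys, x'). event_B n x ys}
               * \<alpha>1 * (1 + ln lam)"
proof -
  define \<alpha> where "\<alpha> = 2 + (1 + c) * exp c"
  have \<alpha>pos: "\<alpha> > 0" using assms unfolding \<alpha>_def by (simp add: add_pos_nonneg)
  show ?thesis
  proof (intro exI[of _ \<alpha>] conjI allI impI \<alpha>pos)
    fix n :: nat and x :: "bool list" and lam :: real and f :: "bool list \<Rightarrow> real"
    assume n1: "n \<ge> 1" and cn: "c \<le> real n" and lx: "length x = n" and lam1: "1 \<le> lam"
      and mono: "monotone_pb n (f :: bool list \<Rightarrow> real)"
    define p where "p = c / real n"
    have p0: "0 \<le> p" "p \<le> 1" using assms cn n1 unfolding p_def by auto
    have pn: "p * real n = c" using n1 unfolding p_def by simp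
    define k where "k = nat (round lam)"
    have "round lam \<ge> 1" using round_mono[OF lam1] by simp
    then have k1: "k \<ge> 1" unfolding k_def by simp
    have k2: "real k \<le> 2 * lam"
      using of_int_round_le[of lam] lam1 \<open>round lam \<ge> 1\<close> unfolding k_def by simp
    obtain m where m: "2^m \<le> k" "k < 2^(m+1)" using ex_power_ivl1[of 2 k] k1 by auto
    define T where "T = m + 1"
    have kT: "real k \<le> 2 ^ T" using m unfolding T_def
      by (metis less_or_eq_imp_le of_nat_le_iff of_nat_numeral of_nat_power)
    have Tb: "real T \<le> 2 * (1 + ln lam)"
    proof -
      have "(2::real)^m \<le> 2 * lam" using m(1) k2
        by (metis of_nat_le_iff of_nat_numeral of_nat_power order_trans)
      then have "ln ((2::real)^m) \<le> ln (2 * lam)" by (intro ln_mono) auto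
      then have "real m * ln 2 \<le> ln 2 + ln lam" using lam1 by (simp add: ln_realpow ln_mult)
      moreover have "0 \<le> ln lam" using lam1 by simp
      ultimately have "real m * ln 2 \<le> ln 2 * (1 + 2 * ln lam)"
      proof -
        have "1 * ln lam \<le> (2 * ln 2) * ln lam" using ln2_half \<open>0 \<le> ln lam\<close> by (intro mult_right_mono) auto
        with \<open>real m * ln 2 \<le> ln 2 + ln lam\<close> show ?thesis by (simp add: algebra_simps)
      qed
      then have "real m \<le> 1 + 2 * ln lam" using ln2_half by simp
      then show ?thesis unfolding T_def by simp
    qed
    define Off where "Off = offspring p k x"
    define M where "M = mutate p x"
    define G where "G = generation c n lam f x"
    define Z where "Z = nzero x"
    have Zn: "Z \<le> n" unfolding Z_def nzero_def using lx length_filter_le[of Not x] by simp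
    define Q where "Q = measure_pmf.expectation Off (\<lambda>ys. if gmax x ys > 0 then 1 else 0 :: real)"
    have Off_supp: "ys \<in> set_pmf Off \<Longrightarrow> length ys = k \<and> (\<forall>y\<in>set ys. length y = n)" for ys
      using set_offspring[of ys p k x] len_mutate lx unfolding Off_def by auto
    have fG: "finite (set_pmf G)" unfolding G_def using fin_gen[OF k_def k1] .
    have probB: "measure_pmf.prob G {(ys, x'). event_B n x ys} = Q"
    proof -
      have "measure_pmf.prob G {(ys, x'). event_B n x ys}
          = measure_pmf.expectation G (\<lambda>z. (\<lambda>ys. if event_B n x ys then 1 else 0 :: real) (fst z))"
      proof -
        have "measure_pmf.expectation G (\<lambda>z. (\<lambda>ys. if event_B n x ys then 1 else 0 :: real) (fst z))
           = measure_pmf.expectation G (indicator {(ys, x'). event_B n x ys})"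
          by (rule arg_cong[where f="measure_pmf.expectation G"]) (auto simp: indicator_def fun_eq_iff)
        then show ?thesis by simp
      qed
      also have "\<dots> = measure_pmf.expectation Off (\<lambda>ys. if event_B n x ys then 1 else 0 :: real)"
        unfolding G_def Off_def p_def by (rule gen_fst[OF k_def k1])
      also have "\<dots> = Q" unfolding Q_def
      proof (intro integral_cong_AE AE_pmfI)
        fix ys assume "ys \<in> set_pmf Off"
        then have "event_B n x ys = (gmax x ys > 0)"
          using Off_supp lx flips_pos gmax_pos unfolding event_B_def by metis
        then show "(if event_B n x ys then 1 else 0 :: real) = (if gmax x ys > 0 then 1 else 0)" by simp
      qed auto
      finally show ?thesis .
    qed
    have E1: "measure_pmf.expectation G (\<lambda>(ys, x'). real (zeros n x') - real (zeros n x))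
        \<ge> measure_pmf.expectation G (\<lambda>z. - real (gmax x (fst z)))"
    proof (intro integral_mono_AE AE_pmfI integrable_measure_pmf_finite fG)
      fix z assume z: "z \<in> set_pmf G"
      obtain ys x' where zz: "z = (ys, x')" by force
      have s: "ys \<in> set_pmf Off" "x' \<in> set ys" using gen_support[OF k_def k1, where z=z and c=c and n=n and f=f and x=x] z zz
        unfolding G_def Off_def p_def by auto
      have lx': "length x' = n" using Off_supp s by auto
      have "nzero x \<le> nzero x' + flips x x'" using nzero_flips[of x x'] lx lx' by simp
      moreover have "flips x x' \<le> gmax x ys" using gmax_ge s by auto
      ultimately show "- real (gmax x (fst z)) \<le> (case z of (ys, x') \<Rightarrow> real (zeros n x') - real (zeros n x))"
        using zz zeros_nzero[OF lx] zeros_nzero[OF lx'] by simp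
    qed
    have E2: "measure_pmf.expectation G (\<lambda>z. - real (gmax x (fst z))) = - measure_pmf.expectation Off (\<lambda>ys. real (gmax x ys))"
      using gen_fst[OF k_def k1, of c n f x "\<lambda>ys. - real (gmax x ys)"] unfolding G_def Off_def p_def by simp
    have E3: "measure_pmf.expectation Off (\<lambda>ys. real (gmax x ys))
        \<le> T * Q + k * measure_pmf.expectation M (\<lambda>y. max 0 (real (flips x y) - T))"
    proof -
      have "measure_pmf.expectation Off (\<lambda>ys. real (gmax x ys))
          \<le> measure_pmf.expectation Off (\<lambda>ys. real T * (if gmax x ys > 0 then 1 else 0 :: real) + sum_list (map (\<lambda>y. max 0 (real (flips x y) - T)) ys))"
        apply (rule integral_mono)
          apply (simp add: integrable_measure_pmf_finite Off_def fin_offspring)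
         apply (simp add: integrable_measure_pmf_finite Off_def fin_offspring)
        apply (rule gmax_bound)
        done
      also have "\<dots> = T * Q + measure_pmf.expectation Off (\<lambda>ys. sum_list (map (\<lambda>y. max 0 (real (flips x y) - T)) ys))"
        unfolding Q_def by (simp add: integrable_measure_pmf_finite Off_def fin_offspring)
      also have "\<dots> = T * Q + k * measure_pmf.expectation M (\<lambda>y. max 0 (real (flips x y) - T))"
        unfolding Off_def M_def by (simp add: exp_offspring_sum)
      finally show ?thesis .
    qed
    have E4: "measure_pmf.expectation M (\<lambda>y. max 0 (real (flips x y) - T))
        \<le> measure_pmf.expectation M (\<lambda>y. real (flips x y) * 2 ^ flips x y) / 2 ^ (T + 1)"
    proof -
      have "measure_pmf.expectation M (\<lambda>y. max 0 (real (flips x y) - T))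
          \<le> measure_pmf.expectation M (\<lambda>y. real (flips x y) * 2 ^ flips x y / 2 ^ (T + 1))"
        apply (rule integral_mono)
          apply (simp add: integrable_measure_pmf_finite M_def fin_mutate)
         apply (simp add: integrable_measure_pmf_finite M_def fin_mutate)
        apply (rule max_pow_bound)
        done
      then show ?thesis by simp
    qed
    have E5: "measure_pmf.expectation M (\<lambda>y. real (flips x y) * 2 ^ flips x y) \<le> 2 * p * Z * exp c"
    proof -
      have "(1 + p) ^ Z \<le> (1 + p) ^ n" using Zn p0 by (intro power_increasing) auto
      also have "\<dots> \<le> exp p ^ n" using p0 by (intro power_mono) (auto simp: exp_ge_add_one_self add.commute)
      also have "\<dots> = exp c" using pn by (simp add: exp_of_nat_mult[symmetric] mult.commute)
      finally have "(1 + p) ^ Z \<le> exp c" .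
      then have "2 * p * Z * (1 + p) ^ Z \<le> 2 * p * Z * exp c" using p0 by (intro mult_left_mono) auto
      then show ?thesis using exp_F[OF p0, of x] unfolding M_def Z_def by linarith
    qed
    have E6: "p * Z \<le> (1 + c) * (1 - (1 - p) ^ Z)"
    proof (rule pZ_bound[OF p0])
      have "p * Z \<le> p * n" using Zn p0 by (intro mult_left_mono) auto
      then show "p * Z \<le> c" using pn by simp
    qed
    have E7: "1 - (1 - p) ^ Z \<le> Q"
    proof -
      obtain k' where kk: "k = Suc k'" using k1 by (cases k) auto
      have "1 - (1 - p) ^ Z = measure_pmf.expectation M (\<lambda>y. if flips x y > 0 then 1 else 0 :: real)"
        using exp_ind[OF p0, of x] unfolding M_def Z_def by simp
      also have "\<dots> = measure_pmf.expectation Off (\<lambda>ys. if flips x (hd ys) > 0 then 1 else 0 :: real)"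
        unfolding Off_def M_def kk by (rule exp_offspring_hd[symmetric])
      also have "\<dots> \<le> Q" unfolding Q_def
      proof (intro integral_mono_AE AE_pmfI integrable_measure_pmf_finite)
        fix ys assume "ys \<in> set_pmf Off"
        then have "ys \<noteq> []" using Off_supp k1 by fastforce
        then have "flips x (hd ys) \<le> gmax x ys" using gmax_ge hd_in_set by blast
        then show "(if flips x (hd ys) > 0 then 1 else 0 :: real) \<le> (if gmax x ys > 0 then 1 else 0)" by auto
      qed (auto simp: Off_def fin_offspring)
      finally show ?thesis .
    qed
    have Q0: "0 \<le> Q" unfolding Q_def by (intro integral_nonneg_AE) auto
    have "k * measure_pmf.expectation M (\<lambda>y. max 0 (real (flips x y) - T))
        \<le> k * (2 * p * Z * exp c / 2 ^ (T + 1))"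
    proof (rule mult_left_mono)
      have "measure_pmf.expectation M (\<lambda>y. real (flips x y) * 2 ^ flips x y) / 2 ^ (T + 1)
          \<le> 2 * p * Z * exp c / 2 ^ (T + 1)" using E5 by (rule divide_right_mono) simp
      with E4 show "measure_pmf.expectation M (\<lambda>y. max 0 (real (flips x y) - T)) \<le> 2 * p * Z * exp c / 2 ^ (T + 1)"
        by linarith
    qed simp
    also have "\<dots> = (real k / 2 ^ T) * (p * Z * exp c)" by (simp add: field_simps)
    also have "\<dots> \<le> 1 * (p * Z * exp c)"
      using kT p0 by (intro mult_right_mono) auto
    also have "\<dots> \<le> (1 + c) * Q * exp c"
    proof -
      have "(1 + c) * (1 - (1 - p) ^ Z) \<le> (1 + c) * Q" using E7 assms by (intro mult_left_mono) auto
      with E6 have "p * Z \<le> (1 + c) * Q" by linarith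
      then show ?thesis by (simp add: mult.assoc[symmetric])
    qed
    finally have E8: "k * measure_pmf.expectation M (\<lambda>y. max 0 (real (flips x y) - T)) \<le> (1 + c) * Q * exp c" .
    have "measure_pmf.expectation Off (\<lambda>ys. real (gmax x ys)) \<le> (T + (1 + c) * exp c) * Q"
      using E3 E8 by (simp add: algebra_simps)
    also have "\<dots> \<le> (\<alpha> * (1 + ln lam)) * Q"
    proof (intro mult_right_mono Q0)
      have "0 \<le> ln lam" using lam1 by simp
      have "(1 + c) * exp c \<le> (1 + c) * exp c * (1 + ln lam)"
        using \<open>0 \<le> ln lam\<close> assms by (simp add: algebra_simps)
      then show "T + (1 + c) * exp c \<le> \<alpha> * (1 + ln lam)" using Tb unfolding \<alpha>_def by (simp add: algebra_simps)
    qed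
    finally have fin: "measure_pmf.expectation Off (\<lambda>ys. real (gmax x ys)) \<le> Q * \<alpha> * (1 + ln lam)"
      by (simp add: algebra_simps)
    then show "measure_pmf.expectation (generation c n lam f x)
               (\<lambda>(ys, x'). real (zeros n x') - real (zeros n x))
           \<ge> - measure_pmf.prob (generation c n lam f x) {(ys, x'). event_B n x ys}
               * \<alpha> * (1 + ln lam)"
    proof -
      have "- Q * \<alpha> * (1 + ln lam) = - (Q * \<alpha> * (1 + ln lam))" by simp
      then show ?thesis using E1 E2 fin probB unfolding G_def probB[unfolded G_def] by linarith
    qed
  qed
qed


end
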